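(* Let $t<k$ and $n>2k-t$. Let $\delta$ be an affine $t$-space and $\pi$ an affine $k$-space in $\mathrm{AG}(n,q)$ with $\pi\cap\delta$ an affine $(t-1)$-space. Let $S_1$ be a maximal set of affine $k$-spaces in $\langle\pi,\delta\rangle$, containing $\pi$, such that $\tilde\pi_1\cap H_\infty\neq\tilde\pi_2\cap H_\infty$ for any two distinct $\pi_1,\pi_2\in S_1$ and $\tilde\delta\cap H_\infty\not\subseteq\tilde\pi_1$ for every $\pi_1\in S_1$. Let $S_2$ be the set of all affine $k$-spaces containing $\delta$ and meeting $\langle\pi,\delta\rangle$ in at least a $(t+1)$-space, and $\mathcal{S}=S_1\cup S_2$. Then $\mathcal{S}$ is a maximal set of $k$-spaces in $\mathrm{AG}(n,q)$ pairwise intersecting in at least a $t$-space, and \[|\mathcal{S}|=\theta_k-\theta_{k-t}+\left[{n-t\atop k-t}\right]_q-q^{(k-t+1)(k-t)}\left[{n-k-1\atop k-t}\right]_q=\theta_k+\sum_{j=0}^{k-t-2}\left[{k-t+1\atop j+1}\right]_q q^{(k-t-j)(k-t-j-1)}\left[{n-k-1\atop k-t-j-1}\right]_q.\]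
   Context: $\mathrm{AG}(n,q)$ is viewed as $\mathrm{PG}(n,q)$ minus a hyperplane $H_\infty$; for an affine subspace $\alpha$, $\tilde\alpha$ denotes its projective closure. Affine subspaces intersect in at least a $t$-space if their affine intersection has dimension at least $t$; $\langle\cdot,\cdot\rangle$ is the span. Maximal means no further affine $k$-space can be added while keeping the property. $\left[{n\atop k}\right]_q=\frac{(q^n-1)\cdots(q^{n-k+1}-1)}{(q^k-1)\cdots(q-1)}$ for $k>0$, $=1$ for $k=0$; $\theta_m=\frac{q^{m+1}-1}{q-1}$. *)

theory Defs
  imports "HOL-Analysis.Analysis"
begin

text \<open>AG(n,q) is modelled as the vector space 'a^'n over a finite field 'a,
  with q = CARD('a) and n = CARD('n).\<close>

definition affine_sub :: "('a::field ^ 'n) set \<Rightarrow> bool" where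
  "affine_sub A \<longleftrightarrow> (\<exists>v W. vec.subspace W \<and> A = (\<lambda>w. v + w) ` W)"

text \<open>Direction (linear part) of an affine subspace; for nonempty A this is the
  linear subspace W with A = v + W, i.e. it represents the projective subspace
  closure(A) \<inter> H_\<infinity>.\<close>
definition direction :: "('a::field ^ 'n) set \<Rightarrow> ('a ^ 'n) set" where
  "direction A = {x - y | x y. x \<in> A \<and> y \<in> A}"

definition adim :: "('a::field ^ 'n) set \<Rightarrow> int" where
  "adim A = (if A = {} then -1 else int (vec.dim (direction A)))"

definition aspace :: "int \<Rightarrow> ('a::field ^ 'n) set \<Rightarrow> bool" where
  "aspace d A \<longleftrightarrow> (A = {} \<and> d = -1) \<or> (A \<noteq> {} \<and> affine_sub A \<and> adim A = d)"

definition aspan :: "('a::field ^ 'n) set \<Rightarrow> ('a ^ 'n) set" where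
  "aspan X = \<Inter>{A. affine_sub A \<and> X \<subseteq> A}"

definition meets_in_at_least :: "int \<Rightarrow> ('a::field ^ 'n) set \<Rightarrow> ('a ^ 'n) set \<Rightarrow> bool" where
  "meets_in_at_least t A B \<longleftrightarrow> adim (A \<inter> B) \<ge> t"

definition maximal_t_intersecting :: "nat \<Rightarrow> nat \<Rightarrow> ('a::field ^ 'n) set set \<Rightarrow> bool" where
  "maximal_t_intersecting k t S \<longleftrightarrow>
     (\<forall>A\<in>S. aspace (int k) A) \<and>
     (\<forall>A\<in>S. \<forall>B\<in>S. A \<noteq> B \<longrightarrow> meets_in_at_least (int t) A B) \<and>
     (\<forall>C. aspace (int k) C \<and> C \<notin> S \<longrightarrow> (\<exists>A\<in>S. \<not> meets_in_at_least (int t) C A))"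

definition qbinom :: "real \<Rightarrow> nat \<Rightarrow> nat \<Rightarrow> real" where
  "qbinom q n k = (\<Prod>i<k. (q ^ (n - i) - 1) / (q ^ (i + 1) - 1))"

definition theta :: "real \<Rightarrow> nat \<Rightarrow> real" where
  "theta q m = (q ^ (m + 1) - 1) / (q - 1)"

end

theory Submission
  imports Defs
begin

lemma card_subspace:
  fixes W :: "('a::{field,finite}^'n) set"
  assumes "vec.subspace W"
  shows "card W = CARD('a) ^ vec.dim W"
proof -
  obtain B where B: "B \<subseteq> W" "vec.independent B" "W \<subseteq> vec.span B" "card B = vec.dim W"
    using vec.basis_exists by blast
  have fB: "finite B" by simp
  have spB: "vec.span B = W"
    using B assms by (metis subset_antisym vec.span_minimal)
  define f where "f = (\<lambda>c. \<Sum>v\<in>B. c v *s v)"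
  have "bij_betw f (PiE B (\<lambda>_. UNIV :: 'a set)) W"
  proof (rule bij_betwI')
    fix x y assume x: "x \<in> PiE B (\<lambda>_. UNIV :: 'a set)" and y: "y \<in> PiE B (\<lambda>_. UNIV :: 'a set)"
    show "(f x = f y) = (x = y)"
    proof
      assume "f x = f y"
      then have "(\<Sum>v\<in>B. (x v - y v) *s v) = 0"
        by (simp add: f_def vector_sub_rdistrib sum_subtractf)
      moreover have "finite B \<and> (\<forall>c. (\<Sum>v\<in>B. c v *s v) = 0 \<longrightarrow> (\<forall>v\<in>B. c v = 0))"
        using B(2) vec.independent_explicit[of B] by blast
      ultimately have "\<forall>v\<in>B. x v - y v = 0"
        by (auto dest!: conjunct2 spec[of _ "\<lambda>v. x v - y v"])
      then show "x = y" using x y by (auto intro: PiE_ext)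
    qed simp
  next
    fix x assume "x \<in> PiE B (\<lambda>_. UNIV :: 'a set)"
    have "f x \<in> range (\<lambda>u. \<Sum>v\<in>B. u v *s v)" unfolding f_def by (rule rangeI)
    then show "f x \<in> W" using spB vec.span_finite[OF fB] by simp
  next
    fix y assume "y \<in> W"
    then obtain u where "y = (\<Sum>v\<in>B. u v *s v)" using spB vec.span_finite[OF fB] by auto
    then show "\<exists>x\<in>PiE B (\<lambda>_. UNIV :: 'a set). y = f x"
      by (intro bexI[of _ "restrict u B"]) (auto simp: f_def)
  qed
  then have "card W = card (PiE B (\<lambda>_. UNIV :: 'a set))" by (simp add: bij_betw_same_card)
  also have "\<dots> = CARD('a) ^ card B" by (simp add: card_PiE fB)
  finally show ?thesis using B by simp
qed

lemma dim_UNIV_vec: "vec.dim (UNIV :: ('a::field^'n) set) = CARD('n)"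
  by (simp add: card_cart_basis)

fun indepmod :: "('a::field^'n) set \<Rightarrow> ('a^'n) list \<Rightarrow> bool" where
  "indepmod B [] = True"
| "indepmod B (x # L) = (x \<notin> vec.span B \<and> indepmod (insert x B) L)"

lemma finite_len_lists: "finite {L :: ('b::finite) list. length L = r \<and> P L}"
  by (rule finite_subset[OF _ finite_lists_length_eq[of "UNIV :: 'b set" r]]) auto

lemma count_lists:
  fixes A B :: "('a::{field,finite}^'n) set"
  assumes "vec.subspace A" "B \<subseteq> A" "vec.dim B + r \<le> vec.dim A"
  shows "card {L. length L = r \<and> set L \<subseteq> A \<and> indepmod B L}
       = (\<Prod>i<r. CARD('a) ^ vec.dim A - CARD('a) ^ (vec.dim B + i))"
  using assms(2,3)
proof (induction r arbitrary: B)
  case 0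
  have "{L. length L = 0 \<and> set L \<subseteq> A \<and> indepmod B L} = {[]}" by auto
  then show ?case by simp
next
  case (Suc r)
  define F where "F x = {L. length L = r \<and> set L \<subseteq> A \<and> indepmod (insert x B) L}" for x
  have eq: "{L. length L = Suc r \<and> set L \<subseteq> A \<and> indepmod B L} = (\<Union>x\<in>A - vec.span B. (Cons x) ` F x)"
  proof (rule set_eqI, rule iffI)
    fix L assume "L \<in> {L. length L = Suc r \<and> set L \<subseteq> A \<and> indepmod B L}"
    then obtain x L' where "L = x # L'" "length L' = r" "x \<in> A" "set L' \<subseteq> A" "x \<notin> vec.span B"
       "indepmod (insert x B) L'"
      by (cases L) auto
    then show "L \<in> (\<Union>x\<in>A - vec.span B. (Cons x) ` F x)" by (auto simp: F_def)
  qed (auto simp: F_def)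
  have spA: "vec.span B \<subseteq> A" using Suc.prems assms(1) by (simp add: vec.span_minimal)
  have cardF: "card (F x) = (\<Prod>i<r. CARD('a) ^ vec.dim A - CARD('a) ^ (vec.dim B + Suc i))"
    if "x \<in> A - vec.span B" for x
  proof -
    have d: "vec.dim (insert x B) = vec.dim B + 1" using that by (simp add: vec.dim_insert)
    have "card (F x) = (\<Prod>i<r. CARD('a) ^ vec.dim A - CARD('a) ^ (vec.dim (insert x B) + i))"
      unfolding F_def using Suc.prems that d by (intro Suc.IH) auto
    then show ?thesis using d by simp
  qed
  have "card (\<Union>x\<in>A - vec.span B. (Cons x) ` F x) = (\<Sum>x\<in>A - vec.span B. card ((Cons x) ` F x))"
    by (intro card_UN_disjoint) (auto simp: F_def finite_len_lists)
  also have "\<dots> = (\<Sum>x\<in>A - vec.span B. card (F x))"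
    by (intro sum.cong refl card_image) auto
  also have "\<dots> = (\<Sum>x\<in>A - vec.span B. (\<Prod>i<r. CARD('a) ^ vec.dim A - CARD('a) ^ (vec.dim B + Suc i)))"
    by (intro sum.cong refl cardF)
  also have "\<dots> = card (A - vec.span B) * (\<Prod>i<r. CARD('a) ^ vec.dim A - CARD('a) ^ (vec.dim B + Suc i))"
    by simp
  also have "card (A - vec.span B) = CARD('a) ^ vec.dim A - CARD('a) ^ vec.dim B"
    using spA card_subspace[OF assms(1)] card_subspace[of "vec.span B"]
    by (simp add: card_Diff_subset)
  finally have "card (\<Union>x\<in>A - vec.span B. (Cons x) ` F x) = (CARD('a) ^ vec.dim A - CARD('a) ^ vec.dim B) * (\<Prod>i<r. CARD('a) ^ vec.dim A - CARD('a) ^ (vec.dim B + Suc i))" .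
  then show ?case unfolding eq by (subst prod.lessThan_Suc_shift) simp
qed

lemma indepmod_dim:
  "indepmod B L \<Longrightarrow> vec.dim (B \<union> set L) = vec.dim B + length L"
proof (induction L arbitrary: B)
  case Nil then show ?case by simp
next
  case (Cons x L)
  from Cons.prems have "indepmod (insert x B) L" by simp
  from Cons.IH[OF this] have "vec.dim (insert x B \<union> set L) = vec.dim (insert x B) + length L" .
  moreover have "B \<union> set (x # L) = insert x B \<union> set L" by auto
  moreover have "vec.dim (insert x B) = vec.dim B + 1" using Cons.prems by (simp add: vec.dim_insert)
  ultimately show ?case by simp
qed

lemma indepmod_mono:
  "vec.span M \<subseteq> vec.span N \<Longrightarrow> indepmod N L \<Longrightarrow> indepmod M L"
proof (induction L arbitrary: M N)
  case Nil then show ?case by simp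
next
  case (Cons x L)
  have "vec.span (insert x M) \<subseteq> vec.span (insert x N)"
  proof -
    have "insert x M \<subseteq> vec.span (insert x N)"
      using Cons.prems(1) vec.span_superset[of M] vec.span_mono[of N "insert x N"] vec.span_superset[of "insert x N"]
      by blast
    then show ?thesis using vec.span_mono vec.span_span by blast
  qed
  then show ?case using Cons by auto
qed

lemma indepmod_lift:
  assumes "vec.subspace U"
  shows "vec.span B \<subseteq> U \<Longrightarrow> set L \<subseteq> U \<Longrightarrow> vec.span (B \<union> N) \<inter> U = vec.span B
    \<Longrightarrow> indepmod B L \<Longrightarrow> indepmod (B \<union> N) L"
proof (induction L arbitrary: B)
  case Nil then show ?case by simp
next
  case (Cons x L)
  have xU: "x \<in> U" and xB: "x \<notin> vec.span B" using Cons.prems by auto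
  have x1: "x \<notin> vec.span (B \<union> N)" using Cons.prems(3) xU xB by blast
  have sp1: "vec.span (insert x B) \<subseteq> U"
    using Cons.prems(1) xU assms vec.span_superset[of B] by (intro vec.span_minimal) auto
  have sp2: "vec.span (insert x B \<union> N) \<inter> U = vec.span (insert x B)"
  proof
    show "vec.span (insert x B) \<subseteq> vec.span (insert x B \<union> N) \<inter> U"
      using sp1 vec.span_mono[of "insert x B" "insert x B \<union> N"] by blast
    show "vec.span (insert x B \<union> N) \<inter> U \<subseteq> vec.span (insert x B)"
    proof
      fix y assume y: "y \<in> vec.span (insert x B \<union> N) \<inter> U"
      then obtain c where c: "y - c *s x \<in> vec.span (B \<union> N)"
        using vec.span_insert[of x "B \<union> N"] by auto
      have "y - c *s x \<in> U" using y xU assms by (simp add: vec.subspace_diff vec.subspace_scale)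
      then have "y - c *s x \<in> vec.span B" using c Cons.prems(3) by blast
      then show "y \<in> vec.span (insert x B)" using vec.span_insert[of x B] by auto
    qed
  qed
  have "indepmod (insert x B \<union> N) L"
    using Cons.IH[of "insert x B"] sp1 sp2 Cons.prems by auto
  then show ?case using x1 by simp
qed

lemma indepmod_meet:
  "indepmod (C \<union> N) L \<Longrightarrow> vec.span (C \<union> set L) \<inter> vec.span (C \<union> N) = vec.span C"
proof (induction L arbitrary: C)
  case Nil then show ?case using vec.span_mono[of C "C \<union> N"] by auto
next
  case (Cons x L)
  have x1: "x \<notin> vec.span (C \<union> N)" and i: "indepmod (insert x C \<union> N) L" using Cons.prems by auto
  have IH: "vec.span (insert x C \<union> set L) \<inter> vec.span (insert x C \<union> N) = vec.span (insert x C)"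
    using Cons.IH[OF i] .
  show ?case
  proof
    show "vec.span (C \<union> set (x # L)) \<inter> vec.span (C \<union> N) \<subseteq> vec.span C"
    proof
      fix y assume y: "y \<in> vec.span (C \<union> set (x # L)) \<inter> vec.span (C \<union> N)"
      have "C \<union> set (x # L) = insert x C \<union> set L" by auto
      moreover have "vec.span (C \<union> N) \<subseteq> vec.span (insert x C \<union> N)" by (rule vec.span_mono) auto
      ultimately have "y \<in> vec.span (insert x C)" using y IH by auto
      then obtain c where c: "y - c *s x \<in> vec.span C" using vec.span_insert[of x C] by auto
      show "y \<in> vec.span C"
      proof (cases "c = 0")
        case True then show ?thesis using c by simp
      next
        case False
        have sC: "vec.span C \<subseteq> vec.span (C \<union> N)" by (rule vec.span_mono) auto
        have "y - (y - c *s x) \<in> vec.span (C \<union> N)"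
          using y c sC vec.span_diff[of y "C \<union> N" "y - c *s x"] by blast
        then have "c *s x \<in> vec.span (C \<union> N)" by simp
        then have "(inverse c) *s (c *s x) \<in> vec.span (C \<union> N)" by (rule vec.span_scale)
        then have "x \<in> vec.span (C \<union> N)" using False by simp
        then show ?thesis using x1 by simp
      qed
    qed
    show "vec.span C \<subseteq> vec.span (C \<union> set (x # L)) \<inter> vec.span (C \<union> N)"
      by (auto intro: vec.span_mono[THEN subsetD])
  qed
qed

lemma count_subspaces:
  fixes A M N :: "('a::{field,finite}^'n) set"
  assumes A: "vec.subspace A" and M: "vec.subspace M" and N: "vec.subspace N"
    and MN: "M \<subseteq> N" and NA: "N \<subseteq> A" and k: "vec.dim M \<le> k"
    and kA: "vec.dim N + (k - vec.dim M) \<le> vec.dim A"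
  shows "card {U. vec.subspace U \<and> vec.dim U = k \<and> M \<subseteq> U \<and> U \<subseteq> A \<and> U \<inter> N = M}
           * (\<Prod>i<k - vec.dim M. CARD('a) ^ k - CARD('a) ^ (vec.dim M + i))
         = (\<Prod>i<k - vec.dim M. CARD('a) ^ vec.dim A - CARD('a) ^ (vec.dim N + i))"
proof -
  define r where "r = k - vec.dim M"
  define LS where "LS = {L. length L = r \<and> set L \<subseteq> A \<and> indepmod N L}"
  define UU where "UU = {U. vec.subspace U \<and> vec.dim U = k \<and> M \<subseteq> U \<and> U \<subseteq> A \<and> U \<inter> N = M}"
  define f where "f L = vec.span (M \<union> set L)" for L
  define c where "c = (\<Prod>i<r. CARD('a) ^ k - CARD('a) ^ (vec.dim M + i))"
  have cardLS: "card LS = (\<Prod>i<r. CARD('a) ^ vec.dim A - CARD('a) ^ (vec.dim N + i))"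
    unfolding LS_def using count_lists[OF A NA] kA r_def by simp
  have spMN: "vec.span M \<subseteq> vec.span N" using MN by (rule vec.span_mono)
  have spM: "vec.span M = M" using M by simp
  have spMN2: "vec.span (M \<union> N) = N" using MN N by (simp add: Un_absorb1)
  have f_in: "f L \<in> UU" if L: "L \<in> LS" for L
  proof -
    have i: "indepmod M L" using indepmod_mono[OF spMN] L by (auto simp: LS_def)
    have "vec.dim (f L) = k" using indepmod_dim[OF i] L k by (simp add: f_def LS_def r_def)
    moreover have "f L \<subseteq> A" unfolding f_def using L M A NA MN
      by (intro vec.span_minimal) (auto simp: LS_def)
    moreover have "M \<subseteq> f L" unfolding f_def using vec.span_superset by blast
    moreover have "f L \<inter> N = M"
    proof -
      have "indepmod (M \<union> N) L" using L MN by (simp add: LS_def Un_absorb1)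
      from indepmod_meet[OF this] show ?thesis using spMN2 spM N by (simp add: f_def)
    qed
    ultimately show ?thesis unfolding UU_def f_def by auto
  qed
  have fib: "card {L \<in> LS. f L = U} = c" if U: "U \<in> UU" for U
  proof -
    have Us: "vec.subspace U" and Ud: "vec.dim U = k" and MU: "M \<subseteq> U" and UA: "U \<subseteq> A"
      and UN: "U \<inter> N = M" using U by (auto simp: UU_def)
    have "{L \<in> LS. f L = U} = {L. length L = r \<and> set L \<subseteq> U \<and> indepmod M L}"
    proof (rule set_eqI, rule iffI)
      fix L assume "L \<in> {L \<in> LS. f L = U}"
      then have L: "L \<in> LS" "f L = U" by auto
      have "set L \<subseteq> U" using L(2) vec.span_superset[of "M \<union> set L"] by (auto simp: f_def)
      moreover have "indepmod M L" using indepmod_mono[OF spMN] L by (auto simp: LS_def)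
      ultimately show "L \<in> {L. length L = r \<and> set L \<subseteq> U \<and> indepmod M L}" using L by (auto simp: LS_def)
    next
      fix L assume "L \<in> {L. length L = r \<and> set L \<subseteq> U \<and> indepmod M L}"
      then have L: "length L = r" "set L \<subseteq> U" "indepmod M L" by auto
      have "indepmod (M \<union> N) L"
        using indepmod_lift[OF Us, of M L N] L spM MU spMN2 UN by auto
      then have iN: "indepmod N L" using MN by (simp add: Un_absorb1)
      have fU: "f L \<subseteq> U" unfolding f_def using MU L Us by (intro vec.span_minimal) auto
      have "vec.dim (f L) = k" using indepmod_dim[OF L(3)] L k by (simp add: f_def r_def)
      then have "f L = U" using vec.subspace_dim_equal[OF _ Us fU] Ud by (simp add: f_def)
      then show "L \<in> {L \<in> LS. f L = U}" using L iN UA by (auto simp: LS_def)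
    qed
    also have "card \<dots> = c" unfolding c_def
      using count_lists[OF Us MU] Ud k by (simp add: r_def)
    finally show ?thesis .
  qed
  have "LS = (\<Union>U\<in>UU. {L \<in> LS. f L = U})" using f_in by auto
  moreover have "card (\<Union>U\<in>UU. {L \<in> LS. f L = U}) = (\<Sum>U\<in>UU. card {L \<in> LS. f L = U})"
    by (rule card_UN_disjoint) (auto simp: LS_def finite_len_lists)
  ultimately have "card LS = (\<Sum>U\<in>UU. card {L \<in> LS. f L = U})" by simp
  also have "\<dots> = card UU * c" using fib by simp
  finally show ?thesis using cardLS by (simp add: UU_def c_def r_def)
qed

lemma qbinom_Suc_Suc:
  "qbinom q (Suc n) (Suc k) = qbinom q n k * (q ^ Suc n - 1) / (q ^ Suc k - 1)"
proof -
  have num: "(\<Prod>i<Suc k. q ^ (Suc n - i) - 1) = (q ^ Suc n - 1) * (\<Prod>i<k. q ^ (n - i) - 1)"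
    by (subst prod.lessThan_Suc_shift) simp
  have den: "(\<Prod>i<Suc k. q ^ (i + 1) - 1) = (\<Prod>i<k. q ^ (i + 1) - 1) * (q ^ Suc k - 1)"
    by simp
  have d: "q ^ Suc k - 1 \<noteq> 0 \<or> q ^ Suc k - 1 = 0" by simp
  show ?thesis unfolding qbinom_def prod_dividef num den by simp
qed

lemma qbinom_0 [simp]: "qbinom q n 0 = 1"
  by (simp add: qbinom_def)

lemma qbinom_zero_left: "k > 0 \<Longrightarrow> qbinom q 0 k = 0"
  by (cases k) (auto simp: qbinom_def prod.lessThan_Suc_shift)

lemma qbinom_gt: "k > n \<Longrightarrow> qbinom q n k = 0"
proof (induction n arbitrary: k)
  case 0 then show ?case by (simp add: qbinom_zero_left)
next
  case (Suc n)
  then obtain k' where "k = Suc k'" "k' > n" by (cases k) auto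
  then show ?case using Suc.IH by (simp add: qbinom_Suc_Suc)
qed

lemma qbinom_Suc_right:
  "qbinom q n (Suc k) = qbinom q n k * (q ^ (n - k) - 1) / (q ^ Suc k - 1)"
  by (simp add: qbinom_def)

lemma qbinom_pascal:
  assumes q: "q > 1"
  shows "qbinom q (Suc n) (Suc s) = q ^ (n - s) * qbinom q n s + qbinom q n (Suc s)"
proof (cases "s \<le> n")
  case True
  have "q ^ Suc s > 1" using q by (intro one_less_power) auto
  then have d: "q ^ Suc s - 1 \<noteq> 0" by simp
  have "q ^ (n - s) * (q ^ Suc s - 1) + (q ^ (n - s) - 1) = q ^ Suc n - 1"
  proof -
    have "q ^ (n - s) * q ^ Suc s = q ^ Suc n" using True by (simp add: power_add[symmetric])
    then show ?thesis by (simp add: algebra_simps)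
  qed
  then have key: "q ^ (n - s) * (q ^ Suc s - 1) + (q ^ (n - s) - 1) = q ^ Suc n - 1" .
  have gen: "x * B + B * y / dd = B * (x * dd + y) / dd" if "dd \<noteq> 0" for x B y dd :: real
    using that by (simp add: field_simps)
  show ?thesis unfolding qbinom_Suc_Suc[of q n s] qbinom_Suc_right[of q n s] gen[OF d] key by simp
next
  case False
  then show ?thesis by (simp add: qbinom_gt)
qed

lemma qbinom_theta:
  assumes q: "q > 1"
  shows "qbinom q (Suc m) m = theta q m"
proof (induction m)
  case 0 then show ?case using q by (simp add: theta_def)
next
  case (Suc m)
  have "q ^ Suc m > 1" using q by (intro one_less_power) auto
  then have d: "q ^ Suc m - 1 \<noteq> 0" "q - 1 \<noteq> 0" using q by auto
  have "qbinom q (Suc (Suc m)) (Suc m) = qbinom q (Suc m) m * (q ^ Suc (Suc m) - 1) / (q ^ Suc m - 1)"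
    by (rule qbinom_Suc_Suc)
  also have "\<dots> = (q ^ Suc m - 1) / (q - 1) * (q ^ Suc (Suc m) - 1) / (q ^ Suc m - 1)"
    using Suc.IH by (simp add: theta_def)
  also have "\<dots> = (q ^ Suc (Suc m) - 1) / (q - 1)"
  proof -
    have gen: "\<And>A B C::real. A \<noteq> 0 \<Longrightarrow> A / B * C / A = C / B" by (simp add: field_simps)
    show ?thesis by (rule gen) (use d in auto)
  qed
  finally show ?case by (simp add: theta_def)
qed

lemma q_vandermonde:
  assumes q: "q > 1"
  shows "qbinom q (m + N) r = (\<Sum>i\<le>r. qbinom q N i * qbinom q m (r - i) * q ^ ((N - i) * (r - i)))"
proof (induction m arbitrary: r)
  case 0
  have "(\<Sum>i\<le>r. qbinom q N i * qbinom q 0 (r - i) * q ^ ((N - i) * (r - i)))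
      = (\<Sum>i\<in>{r}. qbinom q N i * qbinom q 0 (r - i) * q ^ ((N - i) * (r - i)))"
    by (intro sum.mono_neutral_right) (auto simp: qbinom_zero_left)
  then show ?case by simp
next
  case (Suc m)
  show ?case
  proof (cases r)
    case 0 then show ?thesis by simp
  next
    case (Suc s)
    define f where "f i = qbinom q N i * qbinom q m (Suc s - i) * q ^ ((N - i) * (Suc s - i))" for i
    define g where "g i = qbinom q N i * qbinom q m (s - i) * q ^ ((N - i) * (s - i))" for i
    have "qbinom q (Suc m + N) r = q ^ (m + N - s) * qbinom q (m + N) s + qbinom q (m + N) (Suc s)"
      using Suc qbinom_pascal[OF q, of "m + N" s] by simp
    also have "\<dots> = (\<Sum>i\<le>s. q ^ (m + N - s) * g i) + (\<Sum>i\<le>Suc s. f i)"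
      using Suc.IH[of s] Suc.IH[of "Suc s"] by (simp add: g_def f_def sum_distrib_left)
    also have "(\<Sum>i\<le>s. q ^ (m + N - s) * g i)
        = (\<Sum>i\<le>s. qbinom q N i * (q ^ (m - (s - i)) * qbinom q m (s - i)) * q ^ ((N - i) * (Suc s - i)))"
    proof (intro sum.cong refl)
      fix i assume i: "i \<in> {..s}"
      show "q ^ (m + N - s) * g i = qbinom q N i * (q ^ (m - (s - i)) * qbinom q m (s - i)) * q ^ ((N - i) * (Suc s - i))"
      proof (cases "i \<le> N \<and> s - i \<le> m")
        case True
        have e: "(N - i) * (s - i) + (m + N - s) = m - (s - i) + (N - i) * (Suc s - i)"
        proof -
          define X where "X = (N - i) * (s - i)"
          have "Suc s - i = Suc (s - i)" using i by auto
          then have "(N - i) * (Suc s - i) = X + (N - i)" by (simp add: X_def)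
          moreover have "i \<le> s" using i by simp
          ultimately show ?thesis unfolding X_def[symmetric] using True by linarith
        qed
        have pe: "q ^ (m + N - s) * q ^ ((N - i) * (s - i)) = q ^ (m - (s - i)) * q ^ ((N - i) * (Suc s - i))"
          by (metis power_add e add.commute)
        have "q ^ (m + N - s) * g i = qbinom q N i * qbinom q m (s - i) * (q ^ (m + N - s) * q ^ ((N - i) * (s - i)))"
          unfolding g_def by (simp add: ac_simps)
        also have "\<dots> = qbinom q N i * qbinom q m (s - i) * (q ^ (m - (s - i)) * q ^ ((N - i) * (Suc s - i)))"
          by (simp only: pe)
        finally show ?thesis by (simp add: ac_simps)
      next
        case False
        then show ?thesis by (auto simp: g_def qbinom_gt)
      qed
    qed
    finally have L: "qbinom q (Suc m + N) r = (\<Sum>i\<le>s. qbinom q N i * (q ^ (m - (s - i)) * qbinom q m (s - i)) * q ^ ((N - i) * (Suc s - i))) + (\<Sum>i\<le>Suc s. f i)" .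
    have R: "(\<Sum>i\<le>r. qbinom q N i * qbinom q (Suc m) (r - i) * q ^ ((N - i) * (r - i)))
      = (\<Sum>i\<le>s. qbinom q N i * (q ^ (m - (s - i)) * qbinom q m (s - i)) * q ^ ((N - i) * (Suc s - i))) + (\<Sum>i\<le>Suc s. f i)"
    proof -
      have "(\<Sum>i\<le>r. qbinom q N i * qbinom q (Suc m) (r - i) * q ^ ((N - i) * (r - i)))
         = (\<Sum>i\<le>s. qbinom q N i * qbinom q (Suc m) (Suc s - i) * q ^ ((N - i) * (Suc s - i)))
           + qbinom q N (Suc s)"
        using Suc by simp
      also have "(\<Sum>i\<le>s. qbinom q N i * qbinom q (Suc m) (Suc s - i) * q ^ ((N - i) * (Suc s - i)))
         = (\<Sum>i\<le>s. qbinom q N i * (q ^ (m - (s - i)) * qbinom q m (s - i)) * q ^ ((N - i) * (Suc s - i)))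
           + (\<Sum>i\<le>s. f i)"
        unfolding sum.distrib[symmetric]
      proof (intro sum.cong refl)
        fix i assume i: "i \<in> {..s}"
        have "Suc s - i = Suc (s - i)" using i by auto
        then have "qbinom q (Suc m) (Suc s - i) = q ^ (m - (s - i)) * qbinom q m (s - i) + qbinom q m (Suc s - i)"
          using qbinom_pascal[OF q, of m "s - i"] by simp
        then show "qbinom q N i * qbinom q (Suc m) (Suc s - i) * q ^ ((N - i) * (Suc s - i)) =
          qbinom q N i * (q ^ (m - (s - i)) * qbinom q m (s - i)) * q ^ ((N - i) * (Suc s - i)) + f i"
          by (simp add: f_def algebra_simps)
      qed
      also have "(\<Sum>i\<le>Suc s. f i) = (\<Sum>i\<le>s. f i) + qbinom q N (Suc s)"
        by (simp add: f_def)
      ultimately show ?thesis by simp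
    qed
    show ?thesis using L R by simp
  qed
qed

lemma final_identity:
  assumes q: "q > 1" and tk: "t < k" and n: "k + 1 < n"
  shows "theta q k - theta q (k - t) + qbinom q (n - t) (k - t)
                 - q ^ ((k - t + 1) * (k - t)) * qbinom q (n - k - 1) (k - t)
              = theta q k + (\<Sum>j<k - t - 1. qbinom q (k - t + 1) (j + 1)
                   * q ^ ((k - t - j) * (k - t - j - 1)) * qbinom q (n - k - 1) (k - t - j - 1))"
proof -
  define r where "r = k - t"
  define p where "p = r - 1"
  define m where "m = n - k - 1"
  have r: "r = Suc p" using tk by (simp add: r_def p_def)
  have nt: "n - t = m + (r + 1)" using tk n by (simp add: m_def r_def)
  define F where "F i = qbinom q (r + 1) i * qbinom q m (r - i) * q ^ ((r + 1 - i) * (r - i))" for i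
  have V: "qbinom q (n - t) r = (\<Sum>i\<le>r. F i)" unfolding nt F_def by (rule q_vandermonde[OF q])
  have "(\<Sum>i\<le>r. F i) = F 0 + (\<Sum>i<p. F (Suc i)) + F (Suc p)"
  proof -
    have "(\<Sum>i\<le>Suc p. F i) = F 0 + (\<Sum>i\<le>p. F (Suc i))" by (rule sum.atMost_Suc_shift)
    moreover have "(\<Sum>i\<le>p. F (Suc i)) = (\<Sum>i<p. F (Suc i)) + F (Suc p)"
      by (subst lessThan_Suc_atMost[symmetric]) (rule sum.lessThan_Suc)
    ultimately show ?thesis unfolding r by simp
  qed
  moreover have "F 0 = q ^ ((r + 1) * r) * qbinom q m r" by (simp add: F_def)
  moreover have "F (Suc p) = theta q r"
    using qbinom_theta[OF q, of r] by (simp add: F_def r)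
  moreover have "(\<Sum>i<p. F (Suc i)) = (\<Sum>j<p. qbinom q (r + 1) (j + 1)
                   * q ^ ((r - j) * (r - j - 1)) * qbinom q m (r - j - 1))"
    by (intro sum.cong refl) (simp add: F_def r)
  ultimately show ?thesis using V by (simp add: r_def [symmetric] p_def m_def)
qed

lemma prod_nat_real:
  fixes Q :: nat
  assumes "c + r \<le> a" "Q \<ge> 1"
  shows "real (\<Prod>i<r. Q ^ a - Q ^ (c + i)) = (\<Prod>i<r. real Q ^ (c + i)) * (\<Prod>i<r. real Q ^ (a - c - i) - 1)"
proof -
  have "real (\<Prod>i<r. Q ^ a - Q ^ (c + i)) = (\<Prod>i<r. real Q ^ (c + i) * (real Q ^ (a - c - i) - 1))"
    unfolding of_nat_prod
  proof (intro prod.cong refl)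
    fix i assume i: "i \<in> {..<r}"
    have le: "Q ^ (c + i) \<le> Q ^ a" using assms i by (intro power_increasing) auto
    have "real Q ^ a = real Q ^ (c + i) * real Q ^ (a - c - i)"
      using assms i by (simp add: power_add[symmetric])
    then show "real (Q ^ a - Q ^ (c + i)) = real Q ^ (c + i) * (real Q ^ (a - c - i) - 1)"
      using le by (simp add: of_nat_diff algebra_simps)
  qed
  then show ?thesis by (simp add: prod.distrib)
qed

lemma prod_ratio:
  fixes Q :: nat
  assumes "c + r \<le> a" "Q \<ge> 2" "b \<le> c"
  shows "real (\<Prod>i<r. Q ^ a - Q ^ (c + i)) / real (\<Prod>i<r. Q ^ (b + r) - Q ^ (b + i))
       = real Q ^ ((c - b) * r) * qbinom (real Q) (a - c) r"
proof -
  have n: "real (\<Prod>i<r. Q ^ a - Q ^ (c + i)) = (\<Prod>i<r. real Q ^ (c + i)) * (\<Prod>i<r. real Q ^ (a - c - i) - 1)"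
    using prod_nat_real[of c r a Q] assms by simp
  have d: "real (\<Prod>i<r. Q ^ (b + r) - Q ^ (b + i)) = (\<Prod>i<r. real Q ^ (b + i)) * (\<Prod>i<r. real Q ^ (b + r - b - i) - 1)"
    using prod_nat_real[of b r "b + r" Q] assms by simp
  have rfl: "(\<Prod>i<r. real Q ^ (b + r - b - i) - 1) = (\<Prod>i<r. real Q ^ (i + 1) - 1)"
  proof -
    have "(\<Prod>i<r. real Q ^ (b + r - b - i) - 1) = (\<Prod>i<r. (\<lambda>j. real Q ^ (j + 1) - 1) (r - Suc i))"
      by (intro prod.cong refl) (auto simp: Suc_diff_Suc)
    also have "\<dots> = (\<Prod>i<r. real Q ^ (i + 1) - 1)" by (rule prod.nat_diff_reindex)
    finally show ?thesis .
  qed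
  have pw: "(\<Prod>i<r. real Q ^ (c + i)) = real Q ^ ((c - b) * r) * (\<Prod>i<r. real Q ^ (b + i))"
  proof -
    have "(\<Prod>i<r. real Q ^ (c + i)) = (\<Prod>i<r. real Q ^ (c - b) * real Q ^ (b + i))"
    proof (rule prod.cong[OF refl])
      fix i show "real Q ^ (c + i) = real Q ^ (c - b) * real Q ^ (b + i)"
        using assms(3) by (simp add: power_add[symmetric])
    qed
    also have "\<dots> = (real Q ^ (c - b)) ^ r * (\<Prod>i<r. real Q ^ (b + i))" by (simp add: prod.distrib)
    also have "(real Q ^ (c - b)) ^ r = real Q ^ ((c - b) * r)" by (simp add: power_mult)
    finally show ?thesis .
  qed
  have nz: "(\<Prod>i<r. real Q ^ (b + i)) \<noteq> 0" using assms by simp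
  show ?thesis unfolding n d rfl pw qbinom_def prod_dividef using nz assms(2) by simp
qed

abbreviation tr :: "('a::field^'n) \<Rightarrow> ('a^'n) set \<Rightarrow> ('a^'n) set" where
  "tr p W \<equiv> (\<lambda>w. p + w) ` W"

lemma mem_tr: "x \<in> tr p W \<longleftrightarrow> x - p \<in> W"
  by (auto simp: image_iff) (metis add_diff_cancel_left' diff_add_cancel add.commute)

lemma direction_tr: "vec.subspace W \<Longrightarrow> direction (tr v W) = W"
  unfolding direction_def
proof (auto simp: vec.subspace_diff)
  fix x assume "vec.subspace W" "x \<in> W"
  then show "\<exists>a b. x = a - b \<and> a \<in> tr v W \<and> b \<in> tr v W"
    by (intro exI[of _ "v + x"] exI[of _ "v + 0"]) (auto simp: vec.subspace_0)
qed

lemma tr_recenter: "vec.subspace W \<Longrightarrow> p \<in> tr v W \<Longrightarrow> tr v W = tr p W"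
  unfolding mem_tr
proof (intro set_eqI iffI)
  fix x assume W: "vec.subspace W" and p: "p - v \<in> W"
  { assume "x \<in> tr v W" then have xv: "x - v \<in> W" by (simp add: mem_tr)
    have "(x - v) - (p - v) \<in> W" using vec.subspace_diff[OF W xv p] .
    moreover have "(x - v) - (p - v) = x - p" by simp
    ultimately show "x \<in> tr p W" by (simp add: mem_tr) }
  { assume "x \<in> tr p W" then have xp: "x - p \<in> W" by (simp add: mem_tr)
    have "(x - p) + (p - v) \<in> W" using vec.subspace_add[OF W xp p] .
    then show "x \<in> tr v W" by (simp add: mem_tr) }
qed

lemma tr_nonempty: "vec.subspace W \<Longrightarrow> p \<in> tr p W"
  by (simp add: mem_tr vec.subspace_0)

lemma affine_sub_tr: "vec.subspace W \<Longrightarrow> affine_sub (tr p W)"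
  unfolding affine_sub_def by blast

lemma adim_tr: "vec.subspace W \<Longrightarrow> adim (tr p W) = int (vec.dim W)"
  unfolding adim_def using direction_tr tr_nonempty by fastforce

lemma aspace_tr: "vec.subspace W \<Longrightarrow> vec.dim W = d \<Longrightarrow> aspace (int d) (tr p W)"
  unfolding aspace_def using tr_nonempty affine_sub_tr adim_tr by fastforce

lemma aspace_at:
  assumes "aspace d A" "p \<in> A"
  shows "vec.subspace (direction A) \<and> int (vec.dim (direction A)) = d \<and> A = tr p (direction A)"
proof -
  have ne: "A \<noteq> {}" using assms by auto
  then obtain v W where W: "vec.subspace W" "A = tr v W" "adim A = d"
    using assms unfolding aspace_def affine_sub_def by auto
  have dA: "direction A = W" using W direction_tr by simp
  show ?thesis using W dA ne tr_recenter[of W p v] assms(2) unfolding adim_def by auto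
qed

lemma aspace_nat_ne:
  "aspace (int d) A \<Longrightarrow> A \<noteq> {}"
  unfolding aspace_def by auto

lemma tr_Int: "tr p W1 \<inter> tr p W2 = tr p (W1 \<inter> W2)"
  by (auto simp: mem_tr)

lemma adim_empty [simp]: "adim {} = -1"
  by (simp add: adim_def)

lemma tr_subset: "tr p W1 \<subseteq> tr p W2 \<longleftrightarrow> W1 \<subseteq> W2"
  by (auto simp: mem_tr)

lemma tr_inj: "tr p W1 = tr p W2 \<longleftrightarrow> W1 = W2"
  by (metis subset_antisym tr_subset order_refl)

lemma adim_Int_tr:
  assumes "vec.subspace W1" "vec.subspace W2"
  shows "adim (tr p W1 \<inter> tr p W2) = int (vec.dim (W1 \<inter> W2))"
  using assms by (simp add: tr_Int adim_tr vec.subspace_inter)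

lemma dim_strict:
  assumes "vec.subspace A" "vec.subspace B" "A \<subset> B"
  shows "vec.dim A < vec.dim B"
proof -
  have "vec.span A = A" "vec.span B = B" using assms by simp_all
  then show ?thesis using vec.dim_psubset[of A B] assms by metis
qed

lemma dim_eq_subspace:
  assumes "vec.subspace A" "vec.subspace B" "A \<subseteq> B" "vec.dim B \<le> vec.dim A"
  shows "A = B"
  using vec.subspace_dim_equal assms by blast

definition ssum :: "('a::field^'n) set \<Rightarrow> ('a^'n) set \<Rightarrow> ('a^'n) set" where
  "ssum A B = {x + y | x y. x \<in> A \<and> y \<in> B}"

lemma ssum_subspace: "vec.subspace A \<Longrightarrow> vec.subspace B \<Longrightarrow> vec.subspace (ssum A B)"
  unfolding ssum_def by (rule vec.subspace_sums)

lemma ssum_dim: "vec.subspace A \<Longrightarrow> vec.subspace B \<Longrightarrow>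
   vec.dim (ssum A B) + vec.dim (A \<inter> B) = vec.dim A + vec.dim B"
  unfolding ssum_def by (rule vec.dim_sums_Int)

lemma ssum_ub1: "vec.subspace B \<Longrightarrow> A \<subseteq> ssum A B"
  unfolding ssum_def by (force intro: vec.subspace_0)

lemma ssum_ub2: "vec.subspace A \<Longrightarrow> B \<subseteq> ssum A B"
  unfolding ssum_def by (force intro: vec.subspace_0)

lemma ssum_least: "vec.subspace C \<Longrightarrow> A \<subseteq> C \<Longrightarrow> B \<subseteq> C \<Longrightarrow> ssum A B \<subseteq> C"
  unfolding ssum_def by (auto intro: vec.subspace_add)

lemma card_field_ge2: "CARD('a::{field,finite}) \<ge> 2"
proof -
  have "card {0::'a, 1} \<le> CARD('a)" by (rule card_mono) auto
  then show ?thesis by simp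
qed

lemma span_sub: "vec.subspace U \<Longrightarrow> vec.span U = U"
  by simp

lemma span_insert_subspace:
  assumes "vec.subspace U"
  shows "y \<in> vec.span (insert v U) \<longleftrightarrow> (\<exists>c. y - c *s v \<in> U)"
  using vec.span_insert[of v U] span_sub[OF assms] by simp

lemma dim_insert_subspace:
  assumes "vec.subspace U" "v \<notin> U"
  shows "vec.dim (vec.span (insert v U)) = vec.dim U + 1"
proof -
  have "v \<notin> vec.span U" using assms span_sub by metis
  then show ?thesis by (simp add: vec.dim_insert)
qed

lemma greedy_ext:
  fixes E X :: "('a::field^'n) set"
  assumes E: "vec.subspace E" and X: "vec.subspace X" and EX: "E \<subseteq> X"
  shows "vec.dim E + j \<le> CARD('n) \<Longrightarrow> \<exists>U. vec.subspace U \<and> E \<subseteq> U \<and> vec.dim U = vec.dim E + j \<and>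
      vec.dim (U \<inter> X) + CARD('n) \<le> max (vec.dim E + CARD('n)) (vec.dim E + j + vec.dim X)"
proof (induction j)
  case 0
  show ?case using E EX by (intro exI[of _ E]) (auto simp: Int_absorb2)
next
  case (Suc j)
  then obtain U where U: "vec.subspace U" "E \<subseteq> U" "vec.dim U = vec.dim E + j"
    "vec.dim (U \<inter> X) + CARD('n) \<le> max (vec.dim E + CARD('n)) (vec.dim E + j + vec.dim X)" by auto
  have ltn: "vec.dim U < CARD('n)" using U Suc.prems by simp
  show ?case
  proof (cases "ssum U X = UNIV")
    case False
    then obtain v where v: "v \<notin> ssum U X" by auto
    have vU: "v \<notin> U" using v ssum_ub1[OF X] by auto
    define U' where "U' = vec.span (insert v U)"
    have U's: "vec.subspace U'" by (simp add: U'_def)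
    have dU': "vec.dim U' = vec.dim U + 1" using dim_insert_subspace[OF U(1) vU] by (simp add: U'_def)
    have EU': "E \<subseteq> U'" using U(2) vec.span_superset[of "insert v U"] by (auto simp: U'_def)
    have "U' \<inter> X \<subseteq> U \<inter> X"
    proof
      fix y assume y: "y \<in> U' \<inter> X"
      then obtain c where c: "y - c *s v \<in> U" using span_insert_subspace[OF U(1)] by (auto simp: U'_def)
      show "y \<in> U \<inter> X"
      proof (cases "c = 0")
        case True then show ?thesis using c y by simp
      next
        case False
        have "v = (- inverse c) *s (y - c *s v) + inverse c *s y"
          using False by (simp add: algebra_simps)
        moreover have "(- inverse c) *s (y - c *s v) \<in> U" using vec.subspace_scale[OF U(1) c] .
        moreover have "inverse c *s y \<in> X" using y X by (simp add: vec.subspace_scale)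
        ultimately have "v \<in> ssum U X" unfolding ssum_def by blast
        then show ?thesis using v by simp
      qed
    qed
    then have "vec.dim (U' \<inter> X) \<le> vec.dim (U \<inter> X)" by (rule vec.dim_subset)
    then show ?thesis using U's EU' dU' U by (intro exI[of _ U']) auto
  next
    case True
    have "U \<noteq> UNIV" using ltn dim_UNIV_vec[where 'a='a and 'n='n] by auto
    then obtain v where vU: "v \<notin> U" by auto
    define U' where "U' = vec.span (insert v U)"
    have U's: "vec.subspace U'" by (simp add: U'_def)
    have dU': "vec.dim U' = vec.dim U + 1" using dim_insert_subspace[OF U(1) vU] by (simp add: U'_def)
    have EU': "E \<subseteq> U'" using U(2) vec.span_superset[of "insert v U"] by (auto simp: U'_def)
    have "U \<subseteq> U'" using vec.span_superset[of "insert v U"] by (auto simp: U'_def)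
    then have "ssum U X \<subseteq> ssum U' X" unfolding ssum_def by blast
    then have "ssum U' X = UNIV" using True by auto
    then have "vec.dim (ssum U' X) = CARD('n)" using dim_UNIV_vec by metis
    then have "vec.dim (U' \<inter> X) + CARD('n) = vec.dim U' + vec.dim X"
      using ssum_dim[OF U's X] by simp
    then show ?thesis using U's EU' dU' U by (intro exI[of _ U']) auto
  qed
qed

lemma E_ext:
  fixes D Sg :: "('a::field^'n) set"
  assumes D: "vec.subspace D" and Sg: "vec.subspace Sg" and DSg: "D \<subseteq> Sg"
    and e: "e \<in> Sg" "e \<notin> D"
  shows "vec.subspace (vec.span (insert e D)) \<and> D \<subseteq> vec.span (insert e D) \<and> e \<in> vec.span (insert e D)
    \<and> vec.span (insert e D) \<subseteq> Sg \<and> vec.dim (vec.span (insert e D)) = vec.dim D + 1"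
proof -
  have "vec.span (insert e D) \<subseteq> Sg" using assms by (intro vec.span_minimal) auto
  then show ?thesis using assms dim_insert_subspace[OF D e(2)] vec.span_superset[of "insert e D"] by auto
qed

lemma exists_bad_U:
  fixes D Sg W :: "('a::field^'n) set" and c :: "'a^'n" and k t :: nat
  assumes D: "vec.subspace D" and Sg: "vec.subspace Sg" and W: "vec.subspace W"
    and DSg: "D \<subseteq> Sg" and dD: "vec.dim D = t" and dSg: "vec.dim Sg = k + 1" and dW: "vec.dim W = k"
    and t1: "1 \<le> t" and tk: "t < k" and n: "2 * k - t < CARD('n)"
    and cSg: "c \<in> Sg" and WSg: "\<not> W \<subseteq> Sg" and nd: "\<not> (D \<subseteq> W \<and> c \<in> W)"
  shows "\<exists>U. vec.subspace U \<and> vec.dim U = k \<and> D \<subseteq> U \<and> t + 1 \<le> vec.dim (U \<inter> Sg)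
      \<and> ((\<forall>w\<in>W. \<forall>u\<in>U. c + w \<noteq> u) \<or> vec.dim (W \<inter> U) < t)"
proof (cases "D \<subseteq> W")
  case False
  have dWD: "vec.dim (W \<inter> D) < t"
    using dim_strict[of "W \<inter> D" D] False D W dD by (auto simp: vec.subspace_inter)
  have WSg_lt: "vec.dim (W \<inter> Sg) < k"
    using dim_strict[of "W \<inter> Sg" W] WSg W Sg dW by (auto simp: vec.subspace_inter)
  obtain e where e: "e \<in> Sg" "e \<notin> D" and eW: "vec.dim (W \<inter> vec.span (insert e D)) < t"
  proof (cases "\<exists>e\<in>Sg. e \<notin> ssum D (W \<inter> Sg)")
    case True
    then obtain e where e: "e \<in> Sg" "e \<notin> ssum D (W \<inter> Sg)" by auto
    have eD: "e \<notin> D" using e ssum_ub1[of "W \<inter> Sg" D] W Sg by (auto simp: vec.subspace_inter)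
    have "W \<inter> vec.span (insert e D) \<subseteq> W \<inter> D"
    proof
      fix y assume y: "y \<in> W \<inter> vec.span (insert e D)"
      then obtain l where l: "y - l *s e \<in> D" using span_insert_subspace[OF D] by auto
      have ySg: "y \<in> Sg" using y E_ext[OF D Sg DSg e(1) eD] by auto
      show "y \<in> W \<inter> D"
      proof (cases "l = 0")
        case True then show ?thesis using y l by simp
      next
        case False
        have "e = (- inverse l) *s (y - l *s e) + inverse l *s y"
          using False by (simp add: algebra_simps)
        moreover have "(- inverse l) *s (y - l *s e) \<in> D" using vec.subspace_scale[OF D l] .
        moreover have "inverse l *s y \<in> W \<inter> Sg" using y ySg W Sg by (simp add: vec.subspace_scale)
        ultimately have "e \<in> ssum D (W \<inter> Sg)" unfolding ssum_def by blast
        then show ?thesis using e by simp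
      qed
    qed
    then have "vec.dim (W \<inter> vec.span (insert e D)) < t" using vec.dim_subset dWD le_less_trans by blast
    then show ?thesis using that e eD by blast
  next
    case False
    then have SgS: "Sg \<subseteq> ssum D (W \<inter> Sg)" by auto
    have WSs: "vec.subspace (W \<inter> Sg)" using W Sg by (simp add: vec.subspace_inter)
    have "vec.dim Sg \<le> vec.dim (ssum D (W \<inter> Sg))" using SgS by (rule vec.dim_subset)
    moreover have "vec.dim (ssum D (W \<inter> Sg)) + vec.dim (D \<inter> (W \<inter> Sg)) = t + vec.dim (W \<inter> Sg)"
      using ssum_dim[OF D WSs] dD by simp
    moreover have "D \<inter> (W \<inter> Sg) = W \<inter> D" using DSg by auto
    ultimately have small: "vec.dim (W \<inter> D) + 2 \<le> t" using WSg_lt dSg by simp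
    have "D \<noteq> Sg" using dD dSg tk by auto
    then obtain e where e: "e \<in> Sg" "e \<notin> D" using DSg by auto
    note EE = E_ext[OF D Sg DSg e]
    define E where "E = vec.span (insert e D)"
    have WEs: "vec.subspace (W \<inter> E)" using W EE by (simp add: vec.subspace_inter E_def)
    have "vec.dim (ssum (W \<inter> E) D) + vec.dim ((W \<inter> E) \<inter> D) = vec.dim (W \<inter> E) + t"
      using ssum_dim[OF WEs D] dD by simp
    moreover have "(W \<inter> E) \<inter> D = W \<inter> D" using EE by (auto simp: E_def)
    moreover have "vec.dim (ssum (W \<inter> E) D) \<le> t + 1"
    proof -
      have "ssum (W \<inter> E) D \<subseteq> E" using EE by (intro ssum_least) (auto simp: E_def)
      from vec.dim_subset[OF this] show ?thesis using EE dD by (simp add: E_def)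
    qed
    ultimately have "vec.dim (W \<inter> E) < t" using small by simp
    then show ?thesis using that e by (auto simp: E_def)
  qed
  note EE = E_ext[OF D Sg DSg e]
  define E where "E = vec.span (insert e D)"
  have Es: "vec.subspace E" and DE: "D \<subseteq> E" and ESg: "E \<subseteq> Sg" and dE: "vec.dim E = t + 1"
    using EE dD by (auto simp: E_def)
  define X where "X = ssum W E"
  have Xs: "vec.subspace X" using ssum_subspace[OF W Es] by (simp add: X_def)
  have EX: "E \<subseteq> X" using ssum_ub2[OF W] by (simp add: X_def)
  have dX: "vec.dim X + vec.dim (W \<inter> E) = k + (t + 1)" using ssum_dim[OF W Es] dW dE by (simp add: X_def)
  have kn: "vec.dim E + (k - (t + 1)) \<le> CARD('n)" using dE tk n by linarith
  obtain U where U: "vec.subspace U" "E \<subseteq> U" "vec.dim U = vec.dim E + (k - (t + 1))"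
    "vec.dim (U \<inter> X) + CARD('n) \<le> max (vec.dim E + CARD('n)) (vec.dim E + (k - (t + 1)) + vec.dim X)"
    using greedy_ext[OF Es Xs EX kn] by blast
  have dU: "vec.dim U = k" using U(3) dE tk by simp
  have WUs: "vec.subspace (W \<inter> U)" using W U by (simp add: vec.subspace_inter)
  have UXs: "vec.subspace (U \<inter> X)" using U Xs by (simp add: vec.subspace_inter)
  have "ssum (W \<inter> U) E \<subseteq> U \<inter> X"
    using U(2) EX ssum_ub1[OF Es, of W] by (intro ssum_least[OF UXs]) (auto simp: X_def)
  then have "vec.dim (ssum (W \<inter> U) E) \<le> vec.dim (U \<inter> X)" by (rule vec.dim_subset)
  moreover have "vec.dim (ssum (W \<inter> U) E) + vec.dim ((W \<inter> U) \<inter> E) = vec.dim (W \<inter> U) + (t + 1)"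
    using ssum_dim[OF WUs Es] dE by simp
  moreover have "(W \<inter> U) \<inter> E = W \<inter> E" using U(2) by auto
  ultimately have A1: "vec.dim (W \<inter> U) + (t + 1) \<le> vec.dim (U \<inter> X) + vec.dim (W \<inter> E)" by simp
  have "vec.dim (W \<inter> U) < t"
  proof (cases "vec.dim E + CARD('n) \<ge> vec.dim E + (k - (t + 1)) + vec.dim X")
    case True
    then have "vec.dim (U \<inter> X) \<le> t + 1" using U(4) dE by simp
    then show ?thesis using A1 eW by (simp add: E_def)
  next
    case False
    then have "vec.dim (U \<inter> X) + CARD('n) \<le> k + vec.dim X" using U(4) dE tk by simp
    then show ?thesis using A1 dX n tk by linarith
  qed
  moreover have "t + 1 \<le> vec.dim (U \<inter> Sg)"
    using vec.dim_subset[of E "U \<inter> Sg"] U(2) ESg dE by auto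
  ultimately show ?thesis using U(1) dU DE U(2) by blast
next
  case True
  then have cW: "c \<notin> W" using nd by simp
  define Y where "Y = vec.span (insert c W)"
  have Ys: "vec.subspace Y" by (simp add: Y_def)
  have WY: "W \<subseteq> Y" and cY: "c \<in> Y" using vec.span_superset[of "insert c W"] by (auto simp: Y_def)
  have dY: "vec.dim Y = k + 1" using dim_insert_subspace[OF W cW] dW by (simp add: Y_def)
  obtain e where e: "e \<in> Sg" "e \<notin> Y"
  proof (rule ccontr)
    assume "\<not> thesis"
    then have "Sg \<subseteq> Y" using that by auto
    then have "Sg = Y" using dim_eq_subspace[OF Sg Ys] dY dSg by simp
    then show False using WY WSg by simp
  qed
  have eD: "e \<notin> D" using e True WY by auto
  note EE = E_ext[OF D Sg DSg e(1) eD]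
  define E where "E = vec.span (insert e D)"
  have Es: "vec.subspace E" and DE: "D \<subseteq> E" and ESg: "E \<subseteq> Sg" and dE: "vec.dim E = t + 1"
    and eE: "e \<in> E"
    using EE dD by (auto simp: E_def)
  define Z where "Z = ssum W E"
  have Zs: "vec.subspace Z" using ssum_subspace[OF W Es] by (simp add: Z_def)
  have "vec.dim Z + vec.dim (W \<inter> E) = k + (t + 1)" using ssum_dim[OF W Es] dW dE by (simp add: Z_def)
  moreover have "t \<le> vec.dim (W \<inter> E)" using vec.dim_subset[of D "W \<inter> E"] True DE dD by auto
  ultimately have dZ: "vec.dim Z \<le> k + 1" by simp
  define X where "X = vec.span (insert c Z)"
  have Xs: "vec.subspace X" by (simp add: X_def)
  have dX: "vec.dim X \<le> k + 2"
  proof -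
    have "vec.dim X = vec.dim (insert c Z)" by (simp add: X_def)
    also have "\<dots> \<le> vec.dim Z + 1" by (simp add: vec.dim_insert)
    finally show ?thesis using dZ by simp
  qed
  have ZX: "Z \<subseteq> X" using vec.span_superset[of "insert c Z"] by (auto simp: X_def)
  have cX: "c \<in> X" using vec.span_superset[of "insert c Z"] by (auto simp: X_def)
  have EX: "E \<subseteq> X" using ZX ssum_ub2[OF W, of E] by (auto simp: Z_def)
  have WX: "W \<subseteq> X" using ZX ssum_ub1[OF Es, of W] by (auto simp: Z_def)
  have kn: "vec.dim E + (k - (t + 1)) \<le> CARD('n)" using dE tk n by linarith
  obtain U where U: "vec.subspace U" "E \<subseteq> U" "vec.dim U = vec.dim E + (k - (t + 1))"
    "vec.dim (U \<inter> X) + CARD('n) \<le> max (vec.dim E + CARD('n)) (vec.dim E + (k - (t + 1)) + vec.dim X)"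
    using greedy_ext[OF Es Xs EX kn] by blast
  have dU: "vec.dim U = k" using U(3) dE tk by simp
  have "vec.dim (U \<inter> X) \<le> t + 1" using U(4) dE dX tk n by (auto simp: max_def split: if_splits)
  then have UXE: "U \<inter> X = E"
    using dim_eq_subspace[of E "U \<inter> X"] Es U Xs EX dE by (auto simp: vec.subspace_inter)
  have "\<forall>w\<in>W. \<forall>u\<in>U. c + w \<noteq> u"
  proof (intro ballI notI)
    fix w u assume w: "w \<in> W" and u: "u \<in> U" and cwu: "c + w = u"
    have "u \<in> X" using cwu cX WX w Xs by (metis subsetD vec.subspace_add)
    then have uE: "u \<in> E" using UXE u by auto
    then obtain l where l: "u - l *s e \<in> D" using span_insert_subspace[OF D] by (auto simp: E_def)
    show False
    proof (cases "l = 0")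
      case True
      then have "u \<in> W" using l \<open>D \<subseteq> W\<close> by auto
      then have "u - w \<in> W" using w W by (simp add: vec.subspace_diff)
      then show False using cwu cW by (metis add_diff_cancel_right')
    next
      case False
      have wd: "w - (u - l *s e) \<in> W" using w l \<open>D \<subseteq> W\<close> W by (auto intro: vec.subspace_diff)
      have "c + (w - (u - l *s e)) \<in> Y" using cY wd WY Ys by (metis subsetD vec.subspace_add)
      then have "inverse l *s (c + (w - (u - l *s e))) \<in> Y" using vec.subspace_scale[OF Ys] by blast
      moreover have "c + (w - (u - l *s e)) = l *s e" using cwu by (simp add: algebra_simps)
      ultimately have "e \<in> Y" using False by simp
      then show False using e by simp
    qed
  qed
  moreover have "t + 1 \<le> vec.dim (U \<inter> Sg)"
    using vec.dim_subset[of E "U \<inter> Sg"] U(2) ESg dE by auto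
  ultimately show ?thesis using U(1) dU DE U(2) by blast
qed

lemma count_real:
  fixes A M N :: "('a::{field,finite}^'n) set"
  assumes A: "vec.subspace A" and M: "vec.subspace M" and N: "vec.subspace N"
    and MN: "M \<subseteq> N" and NA: "N \<subseteq> A" and k: "vec.dim M \<le> k"
    and kA: "vec.dim N + (k - vec.dim M) \<le> vec.dim A"
  shows "real (card {U. vec.subspace U \<and> vec.dim U = k \<and> M \<subseteq> U \<and> U \<subseteq> A \<and> U \<inter> N = M})
     = real CARD('a) ^ ((vec.dim N - vec.dim M) * (k - vec.dim M))
       * qbinom (real CARD('a)) (vec.dim A - vec.dim N) (k - vec.dim M)"
proof -
  define m where "m = vec.dim M"
  define Q where "Q = CARD('a)"
  have Q2: "Q \<ge> 2" unfolding Q_def by (rule card_field_ge2)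
  have ct: "card {U. vec.subspace U \<and> vec.dim U = k \<and> M \<subseteq> U \<and> U \<subseteq> A \<and> U \<inter> N = M}
           * (\<Prod>i<k - m. Q ^ (m + (k - m)) - Q ^ (m + i))
         = (\<Prod>i<k - m. Q ^ vec.dim A - Q ^ (vec.dim N + i))"
    using count_subspaces[OF assms] k by (simp add: m_def Q_def)
  have pos: "(\<Prod>i<k - m. Q ^ (m + (k - m)) - Q ^ (m + i)) > 0"
  proof (rule prod_pos)
    fix i assume "i \<in> {..<k - m}"
    then have "m + i < m + (k - m)" by auto
    then have "Q ^ (m + i) < Q ^ (m + (k - m))" using Q2 by (intro power_strict_increasing) auto
    then show "0 < Q ^ (m + (k - m)) - Q ^ (m + i)" by simp
  qed
  have mN: "m \<le> vec.dim N" using vec.dim_subset[OF MN] by (simp add: m_def)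
  have "real (card {U. vec.subspace U \<and> vec.dim U = k \<and> M \<subseteq> U \<and> U \<subseteq> A \<and> U \<inter> N = M})
      = real (\<Prod>i<k - m. Q ^ vec.dim A - Q ^ (vec.dim N + i)) / real (\<Prod>i<k - m. Q ^ (m + (k - m)) - Q ^ (m + i))"
  proof -
    have gen: "real c = real e / real d" if "c * d = e" "d > 0" for c d e :: nat
    proof -
      have "real c * real d = real e" using that(1) by (metis of_nat_mult)
      then show ?thesis using that(2) by (simp add: eq_divide_eq)
    qed
    show ?thesis by (rule gen[OF ct pos])
  qed
  also have "\<dots> = real Q ^ ((vec.dim N - m) * (k - m)) * qbinom (real Q) (vec.dim A - vec.dim N) (k - m)"
    using prod_ratio[of "vec.dim N" "k - m" "vec.dim A" Q m] kA Q2 mN by (simp add: m_def)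
  finally show ?thesis by (simp add: m_def Q_def)
qed

lemma tr_sub_dir:
  assumes "vec.subspace W" "vec.subspace Sg" "tr a W \<subseteq> tr z Sg"
  shows "W \<subseteq> Sg"
proof -
  have "a \<in> tr z Sg" using assms tr_nonempty by blast
  then have "tr z Sg = tr a Sg" using tr_recenter assms(2) by blast
  then show ?thesis using assms(3) tr_subset by metis
qed

lemma tr_meet:
  assumes "vec.subspace W1" "vec.subspace W2" "b - a \<in> ssum W1 W2"
  shows "tr a W1 \<inter> tr b W2 \<noteq> {}"
proof -
  obtain w1 w2 where w: "w1 \<in> W1" "w2 \<in> W2" "b - a = w1 + w2" using assms(3) unfolding ssum_def by blast
  have "a + w1 \<in> tr a W1" using w by auto
  moreover have "a + w1 - b \<in> W2"
  proof -
    have "a + w1 - b = - w2" using w(3) by (simp add: algebra_simps)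
    then show ?thesis using w(2) assms(2) by (simp add: vec.subspace_neg)
  qed
  ultimately show ?thesis by (auto simp: mem_tr)
qed

lemma adim_Int_pt:
  assumes "vec.subspace W1" "vec.subspace W2" "p \<in> tr a W1 \<inter> tr b W2"
  shows "adim (tr a W1 \<inter> tr b W2) = int (vec.dim (W1 \<inter> W2))"
proof -
  have "tr a W1 = tr p W1" "tr b W2 = tr p W2" using assms tr_recenter by blast+
  then show ?thesis using adim_Int_tr assms by simp
qed

lemma parallel_disjoint:
  assumes "vec.subspace W" "tr a W \<noteq> tr b W"
  shows "tr a W \<inter> tr b W = {}"
proof (rule ccontr)
  assume "tr a W \<inter> tr b W \<noteq> {}"
  then obtain p where "p \<in> tr a W" "p \<in> tr b W" by blast
  then have "tr a W = tr p W" "tr b W = tr p W" using assms(1) tr_recenter by blast+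
  then show False using assms(2) by simp
qed

lemma hyperplane_sum:
  assumes W: "vec.subspace W" and X: "vec.subspace X" and Sg: "vec.subspace Sg"
    and "W \<subseteq> Sg" "X \<subseteq> Sg" "vec.dim Sg = vec.dim W + 1" "\<not> X \<subseteq> W"
  shows "ssum W X = Sg"
proof -
  have s: "vec.subspace (ssum W X)" using ssum_subspace[OF W X] .
  have sub: "ssum W X \<subseteq> Sg" using assms by (intro ssum_least) auto
  have "W \<subset> ssum W X" using ssum_ub1[OF X, of W] ssum_ub2[OF W, of X] assms(7) by auto
  then have "vec.dim W < vec.dim (ssum W X)" using dim_strict[OF W s] by simp
  then show ?thesis using dim_eq_subspace[OF s Sg sub] assms(6) by simp
qed

theorem mainTheorem6:
  fixes \<pi> \<delta> :: "(('a::{field,finite}) ^ 'n) set"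
    and S1 :: "('a ^ 'n) set set"
    and k t :: nat
  assumes "t < k"
    and "CARD('n) > 2 * k - t"
    and "aspace (int t) \<delta>"
    and "aspace (int k) \<pi>"
    and "aspace (int t - 1) (\<pi> \<inter> \<delta>)"
    and S1_sub: "\<forall>A\<in>S1. aspace (int k) A \<and> A \<subseteq> aspan (\<pi> \<union> \<delta>)"
    and "\<pi> \<in> S1"
    and S1_prop: "\<forall>A\<in>S1. \<forall>B\<in>S1. A \<noteq> B \<longrightarrow> direction A \<noteq> direction B"
    and S1_prop2: "\<forall>A\<in>S1. \<not> direction \<delta> \<subseteq> direction A"
    and S1_max: "\<forall>C. aspace (int k) C \<and> C \<subseteq> aspan (\<pi> \<union> \<delta>) \<and> C \<notin> S1 \<longrightarrow>
        \<not> ((\<forall>A\<in>insert C S1. \<forall>B\<in>insert C S1. A \<noteq> B \<longrightarrow> direction A \<noteq> direction B)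
           \<and> (\<forall>A\<in>insert C S1. \<not> direction \<delta> \<subseteq> direction A))"
  shows "let q = real CARD('a); n = CARD('n);
             S2 = {A. aspace (int k) A \<and> \<delta> \<subseteq> A \<and> meets_in_at_least (int t + 1) A (aspan (\<pi> \<union> \<delta>))};
             S = S1 \<union> S2
         in maximal_t_intersecting k t S
            \<and> real (card S) = theta q k - theta q (k - t) + qbinom q (n - t) (k - t)
                 - q ^ ((k - t + 1) * (k - t)) * qbinom q (n - k - 1) (k - t)
            \<and> theta q k - theta q (k - t) + qbinom q (n - t) (k - t)
                 - q ^ ((k - t + 1) * (k - t)) * qbinom q (n - k - 1) (k - t)
              = theta q k + (\<Sum>j<k - t - 1. qbinom q (k - t + 1) (j + 1)
                   * q ^ ((k - t - j) * (k - t - j - 1)) * qbinom q (n - k - 1) (k - t - j - 1))"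
proof -
  note tk = assms(1) and nbig = assms(2) and asd = assms(3) and asp = assms(4) and aspd = assms(5)
    and piS1 = assms(7)
  define q where "q = real CARD('a)"
  define n where "n = CARD('n)"
  define Sig where "Sig = aspan (\<pi> \<union> \<delta>)"
  define S2 where "S2 = {A. aspace (int k) A \<and> \<delta> \<subseteq> A \<and> meets_in_at_least (int t + 1) A Sig}"
  have q1: "q > 1" using card_field_ge2[where 'a='a] by (simp add: q_def)
  have t1: "1 \<le> t"
  proof (rule ccontr)
    assume "\<not> 1 \<le> t"
    then have t0: "t = 0" by simp
    obtain p where p: "p \<in> \<delta>" using aspace_nat_ne[OF asd] by blast
    have "vec.dim (direction \<delta>) = 0" using aspace_at[OF asd p] t0 by simp
    then have "direction \<delta> \<subseteq> {0}" by simp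
    moreover obtain x where "x \<in> \<pi>" using aspace_nat_ne[OF asp] by blast
    then have "0 \<in> direction \<pi>" unfolding direction_def by force
    ultimately show False using S1_prop2 piS1 by auto
  qed
  have "int t - 1 = int (t - 1)" using t1 by simp
  then have "aspace (int (t - 1)) (\<pi> \<inter> \<delta>)" using aspd by metis
  then have "\<pi> \<inter> \<delta> \<noteq> {}" by (rule aspace_nat_ne)
  then obtain ob where ob: "ob \<in> \<pi> \<inter> \<delta>" by blast
  define P where "P = direction \<pi>"
  define D where "D = direction \<delta>"
  have Ps: "vec.subspace P" and dP: "vec.dim P = k" and piP: "\<pi> = tr ob P"
    using aspace_at[OF asp, of ob] ob by (auto simp: P_def)
  have Ds: "vec.subspace D" and dD: "vec.dim D = t" and deD: "\<delta> = tr ob D"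
    using aspace_at[OF asd, of ob] ob by (auto simp: D_def)
  have dPD: "vec.dim (P \<inter> D) = t - 1"
  proof -
    have "adim (\<pi> \<inter> \<delta>) = int t - 1" using aspd ob unfolding aspace_def by auto
    moreover have "adim (\<pi> \<inter> \<delta>) = int (vec.dim (P \<inter> D))" using adim_Int_tr[OF Ps Ds] piP deD by simp
    ultimately show ?thesis by simp
  qed
  define Sg where "Sg = ssum P D"
  have Sgs: "vec.subspace Sg" using ssum_subspace[OF Ps Ds] by (simp add: Sg_def)
  have dSg: "vec.dim Sg = k + 1" using ssum_dim[OF Ps Ds] dP dD dPD t1 by (simp add: Sg_def)
  have PSg: "P \<subseteq> Sg" and DSg: "D \<subseteq> Sg" using ssum_ub1[OF Ds] ssum_ub2[OF Ps] by (auto simp: Sg_def)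
  have SigE: "Sig = tr ob Sg"
  proof
    have "\<pi> \<union> \<delta> \<subseteq> tr ob Sg" using piP deD PSg DSg tr_subset by blast
    then show "Sig \<subseteq> tr ob Sg" unfolding Sig_def aspan_def using affine_sub_tr[OF Sgs] by blast
    show "tr ob Sg \<subseteq> Sig" unfolding Sig_def aspan_def
    proof (rule Inter_greatest)
      fix A assume "A \<in> {A. affine_sub A \<and> \<pi> \<union> \<delta> \<subseteq> A}"
      then obtain v W where W: "vec.subspace W" "A = tr v W" and sub: "\<pi> \<union> \<delta> \<subseteq> A"
        unfolding affine_sub_def by auto
      have "ob \<in> A" using ob sub by auto
      then have A: "A = tr ob W" using W tr_recenter by blast
      have "P \<subseteq> W" "D \<subseteq> W" using sub piP deD A tr_subset by blast+
      then have "Sg \<subseteq> W" unfolding Sg_def by (intro ssum_least[OF W(1)])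
      then show "tr ob Sg \<subseteq> A" using A tr_subset by blast
    qed
  qed
  have S1k: "aspace (int k) A" and S1Sig: "A \<subseteq> tr ob Sg" if "A \<in> S1" for A
    using S1_sub that SigE by (auto simp: Sig_def)
  have dirS1: "vec.subspace (direction A) \<and> vec.dim (direction A) = k \<and> direction A \<subseteq> Sg
      \<and> A \<noteq> {} \<and> (\<forall>a\<in>A. A = tr a (direction A))" if A: "A \<in> S1" for A
  proof -
    obtain a where a: "a \<in> A" using aspace_nat_ne[OF S1k[OF A]] by blast
    have *: "vec.subspace (direction A)" "vec.dim (direction A) = k" "A = tr a (direction A)"
      using aspace_at[OF S1k[OF A] a] by auto
    have "direction A \<subseteq> Sg" using tr_sub_dir[OF *(1) Sgs] *(3) S1Sig[OF A] by metis
    moreover have "\<forall>a\<in>A. A = tr a (direction A)" using aspace_at[OF S1k[OF A]] by auto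
    ultimately show ?thesis using * a by auto
  qed
  define US where "US = {U. vec.subspace U \<and> vec.dim U = k \<and> D \<subseteq> U \<and> U \<inter> Sg \<noteq> D}"
  have US_dim: "t + 1 \<le> vec.dim (U \<inter> Sg)" if U: "U \<in> US" for U
  proof -
    have "D \<subset> U \<inter> Sg" using U DSg by (auto simp: US_def)
    then have "vec.dim D < vec.dim (U \<inter> Sg)"
      using dim_strict[OF Ds] U Sgs by (auto simp: US_def vec.subspace_inter)
    then show ?thesis using dD by simp
  qed
  have S2_eq: "S2 = tr ob ` US"
  proof
    show "S2 \<subseteq> tr ob ` US"
    proof
      fix A assume A: "A \<in> S2"
      then have Ak: "aspace (int k) A" and dA: "\<delta> \<subseteq> A" and mA: "adim (A \<inter> Sig) \<ge> int t + 1"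
        by (auto simp: S2_def meets_in_at_least_def)
      have obA: "ob \<in> A" using ob dA by auto
      define U where "U = direction A"
      have U: "vec.subspace U" "vec.dim U = k" "A = tr ob U" using aspace_at[OF Ak obA] by (auto simp: U_def)
      have DU: "D \<subseteq> U" using dA deD U(3) tr_subset by metis
      have "adim (A \<inter> Sig) = int (vec.dim (U \<inter> Sg))" using adim_Int_tr[OF U(1) Sgs] U(3) SigE by simp
      then have "vec.dim (U \<inter> Sg) \<noteq> vec.dim D" using mA dD by auto
      then have "U \<inter> Sg \<noteq> D" by auto
      then show "A \<in> tr ob ` US" using U DU by (auto simp: US_def)
    qed
    show "tr ob ` US \<subseteq> S2"
    proof
      fix A assume "A \<in> tr ob ` US"
      then obtain U where U: "U \<in> US" "A = tr ob U" by auto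
      have Us: "vec.subspace U" and dU: "vec.dim U = k" and DU: "D \<subseteq> U" using U by (auto simp: US_def)
      have "aspace (int k) A" using aspace_tr[OF Us dU] U by simp
      moreover have "\<delta> \<subseteq> A" using deD U DU tr_subset by metis
      moreover have "adim (A \<inter> Sig) = int (vec.dim (U \<inter> Sg))" using adim_Int_tr[OF Us Sgs] U(2) SigE by simp
      ultimately show "A \<in> S2" using US_dim[OF U(1)] by (auto simp: S2_def meets_in_at_least_def)
    qed
  qed
  have cardS2: "card S2 = card US"
    unfolding S2_eq by (rule card_image) (auto simp: inj_on_def tr_inj)
  define WS where "WS = {W. vec.subspace W \<and> vec.dim W = k \<and> W \<subseteq> Sg \<and> \<not> D \<subseteq> W}"
  have inj1: "inj_on direction S1" using S1_prop by (auto simp: inj_on_def)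
  have img1: "direction ` S1 = WS"
  proof
    show "direction ` S1 \<subseteq> WS" using dirS1 S1_prop2 by (auto simp: WS_def D_def)
    show "WS \<subseteq> direction ` S1"
    proof
      fix W assume W: "W \<in> WS"
      then have Ws: "vec.subspace W" and dW: "vec.dim W = k" and WSg: "W \<subseteq> Sg" and DW: "\<not> D \<subseteq> W"
        by (auto simp: WS_def)
      define C where "C = tr ob W"
      have Ck: "aspace (int k) C" using aspace_tr[OF Ws dW] by (simp add: C_def)
      have CSig: "C \<subseteq> aspan (\<pi> \<union> \<delta>)" using image_mono[OF WSg, of "\<lambda>w. ob + w"] SigE by (simp add: C_def Sig_def)
      have dC: "direction C = W" using direction_tr[OF Ws] by (simp add: C_def)
      show "W \<in> direction ` S1"
      proof (cases "C \<in> S1")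
        case True then show ?thesis using dC by (intro image_eqI[of W direction C]) auto
      next
        case False
        have P2: "\<forall>A\<in>insert C S1. \<not> direction \<delta> \<subseteq> direction A" using S1_prop2 dC DW by (auto simp: D_def)
        then have "\<not> (\<forall>A\<in>insert C S1. \<forall>B\<in>insert C S1. A \<noteq> B \<longrightarrow> direction A \<noteq> direction B)"
          using S1_max[rule_format, of C] Ck CSig False by blast
        then obtain A B where AB: "A \<in> insert C S1" "B \<in> insert C S1" "A \<noteq> B" "direction A = direction B"
          by blast
        show ?thesis
        proof (cases "A = C")
          case True
          then have "B \<in> S1" "direction B = W" using AB dC by auto
          then show ?thesis by (intro image_eqI[of W direction B]) auto
        next
          case False
          then have A1: "A \<in> S1" using AB by auto
          show ?thesis
          proof (cases "B = C")
            case True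
            then have "direction A = W" using AB dC by simp
            then show ?thesis using A1 by (intro image_eqI[of W direction A]) auto
          next
            case False
            then show ?thesis using A1 AB S1_prop by auto
          qed
        qed
      qed
    qed
  qed
  have cardS1: "card S1 = card WS" using card_image[OF inj1] img1 by simp
  define W_all where "W_all = {U. vec.subspace U \<and> vec.dim U = k \<and> {0} \<subseteq> U \<and> U \<subseteq> Sg \<and> U \<inter> {0} = {0}}"
  define W_D where "W_D = {U. vec.subspace U \<and> vec.dim U = k \<and> D \<subseteq> U \<and> U \<subseteq> Sg \<and> U \<inter> D = D}"
  define U_all where "U_all = {U. vec.subspace U \<and> vec.dim U = k \<and> D \<subseteq> U \<and> U \<subseteq> UNIV \<and> U \<inter> D = D}"
  define U_dis where "U_dis = {U. vec.subspace U \<and> vec.dim U = k \<and> D \<subseteq> U \<and> U \<subseteq> UNIV \<and> U \<inter> Sg = D}"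
  have z: "vec.subspace ({0} :: ('a^'n) set)" by simp
  have dz: "vec.dim ({0} :: ('a^'n) set) = 0" by simp
  have zSg: "{0} \<subseteq> Sg" using Sgs vec.subspace_0 by auto
  have nU: "vec.dim (UNIV :: ('a^'n) set) = n" by (simp add: card_cart_basis n_def)
  have nk: "k + 1 + (k - t) \<le> n" using nbig tk by (simp add: n_def)
  have c1: "real (card W_all) = theta q k"
    using count_real[OF Sgs z z order_refl zSg, of k] dz dSg qbinom_theta[OF q1, of k]
    by (simp add: W_all_def q_def)
  have c2: "real (card W_D) = theta q (k - t)"
  proof -
    have "Suc k - t = Suc (k - t)" using tk by simp
    then show ?thesis
      using count_real[OF Sgs Ds Ds order_refl DSg, of k] dD dSg tk qbinom_theta[OF q1, of "k - t"]
      by (simp add: W_D_def q_def)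
  qed
  have c3: "real (card U_all) = qbinom q (n - t) (k - t)"
    using count_real[OF vec.subspace_UNIV Ds Ds order_refl subset_UNIV, of k] dD tk nU nk
    by (simp add: U_all_def q_def)
  have c4: "real (card U_dis) = q ^ ((k - t + 1) * (k - t)) * qbinom q (n - k - 1) (k - t)"
  proof -
    have "k + 1 - t = k - t + 1" using tk by simp
    then show ?thesis
      using count_real[OF vec.subspace_UNIV Ds Sgs DSg subset_UNIV, of k] dD dSg tk nU nk
      by (simp add: U_dis_def q_def)
  qed
  have WS_eq: "WS = W_all - W_D" and WDsub: "W_D \<subseteq> W_all"
    using vec.subspace_0 by (auto simp: WS_def W_all_def W_D_def)
  have US_eq: "US = U_all - U_dis" and Udsub: "U_dis \<subseteq> U_all"
    by (auto simp: US_def U_all_def U_dis_def)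
  have cWS: "real (card WS) = theta q k - theta q (k - t)"
    using WS_eq WDsub card_mono[OF _ WDsub] c1 c2 by (simp add: card_Diff_subset of_nat_diff)
  have cUS: "real (card US) = qbinom q (n - t) (k - t) - q ^ ((k - t + 1) * (k - t)) * qbinom q (n - k - 1) (k - t)"
    using US_eq Udsub card_mono[OF _ Udsub] c3 c4 by (simp add: card_Diff_subset of_nat_diff)
  have disj: "S1 \<inter> S2 = {}"
  proof (rule ccontr)
    assume "S1 \<inter> S2 \<noteq> {}"
    then obtain A where A: "A \<in> S1" "A \<in> S2" by blast
    then obtain U where U: "U \<in> US" "A = tr ob U" using S2_eq by auto
    then have "direction A = U" using direction_tr by (auto simp: US_def)
    then show False using S1_prop2 A(1) U(1) by (auto simp: US_def D_def)
  qed
  have cardS: "real (card (S1 \<union> S2)) = theta q k - theta q (k - t) + qbinom q (n - t) (k - t)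
                 - q ^ ((k - t + 1) * (k - t)) * qbinom q (n - k - 1) (k - t)"
    using card_Un_disjoint[of S1 S2] disj cardS1 cardS2 cWS cUS by simp
  have S2_at: "\<exists>U. U \<in> US \<and> A = tr ob U" if "A \<in> S2" for A using that S2_eq by auto
  have USs: "vec.subspace U" "vec.dim U = k" "D \<subseteq> U" if "U \<in> US" for U using that by (auto simp: US_def)
  have inSg: "a - ob \<in> Sg" if "a \<in> A" "A \<in> S1" for a A using that S1Sig mem_tr by blast
  have p11: "int t \<le> adim (A \<inter> B)" if A: "A \<in> S1" and B: "B \<in> S1" and AB: "A \<noteq> B" for A B
  proof -
    define W1 where "W1 = direction A"
    define W2 where "W2 = direction B"
    obtain a where a: "a \<in> A" using dirS1[OF A] by auto
    obtain b where b: "b \<in> B" using dirS1[OF B] by auto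
    have W1: "vec.subspace W1" "vec.dim W1 = k" "W1 \<subseteq> Sg" "A = tr a W1" using dirS1[OF A] a by (auto simp: W1_def)
    have W2: "vec.subspace W2" "vec.dim W2 = k" "W2 \<subseteq> Sg" "B = tr b W2" using dirS1[OF B] b by (auto simp: W2_def)
    have ne: "W1 \<noteq> W2" using S1_prop A B AB by (auto simp: W1_def W2_def)
    have "\<not> W2 \<subseteq> W1" using dim_eq_subspace[OF W2(1) W1(1)] W1 W2 ne by auto
    then have ss: "ssum W1 W2 = Sg" using hyperplane_sum[OF W1(1) W2(1) Sgs W1(3) W2(3)] dSg W1(2) by simp
    have "b - a \<in> Sg" using inSg[OF a A] inSg[OF b B] Sgs vec.subspace_diff by fastforce
    then have "tr a W1 \<inter> tr b W2 \<noteq> {}" using tr_meet[OF W1(1) W2(1)] ss by simp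
    then obtain p where "p \<in> tr a W1 \<inter> tr b W2" by blast
    then have "adim (A \<inter> B) = int (vec.dim (W1 \<inter> W2))" using adim_Int_pt[OF W1(1) W2(1)] W1 W2 by simp
    moreover have "vec.dim (W1 \<inter> W2) + (k + 1) = k + k" using ssum_dim[OF W1(1) W2(1)] ss dSg W1 W2 by simp
    ultimately show ?thesis using tk by simp
  qed
  have p12: "int t \<le> adim (A \<inter> B)" if A: "A \<in> S1" and B: "B \<in> S2" for A B
  proof -
    define W1 where "W1 = direction A"
    obtain a where a: "a \<in> A" using dirS1[OF A] by auto
    have W1: "vec.subspace W1" "vec.dim W1 = k" "W1 \<subseteq> Sg" "A = tr a W1" using dirS1[OF A] a by (auto simp: W1_def)
    obtain U where U: "U \<in> US" "B = tr ob U" using S2_at[OF B] by blast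
    note Us = USs[OF U(1)]
    define X where "X = U \<inter> Sg"
    have Xs: "vec.subspace X" using Us Sgs by (simp add: X_def vec.subspace_inter)
    have dX: "t + 1 \<le> vec.dim X" using US_dim[OF U(1)] by (simp add: X_def)
    have "\<not> D \<subseteq> W1" using S1_prop2 A by (simp add: W1_def D_def)
    then have "\<not> X \<subseteq> W1" using Us DSg by (auto simp: X_def)
    then have ss: "ssum W1 X = Sg" using hyperplane_sum[OF W1(1) Xs Sgs W1(3)] dSg W1(2) by (auto simp: X_def)
    have "ob - a \<in> Sg" using inSg[OF a A] Sgs vec.subspace_neg by fastforce
    then have "ob - a \<in> ssum W1 U" using ss unfolding ssum_def X_def by blast
    then have "tr a W1 \<inter> tr ob U \<noteq> {}" using tr_meet[OF W1(1) Us(1)] by simp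
    then obtain p where "p \<in> tr a W1 \<inter> tr ob U" by blast
    then have "adim (A \<inter> B) = int (vec.dim (W1 \<inter> U))" using adim_Int_pt[OF W1(1) Us(1)] W1 U by simp
    moreover have "vec.dim (W1 \<inter> X) \<le> vec.dim (W1 \<inter> U)" by (rule vec.dim_subset) (auto simp: X_def)
    moreover have "vec.dim (W1 \<inter> X) + (k + 1) = k + vec.dim X" using ssum_dim[OF W1(1) Xs] ss dSg W1 by simp
    ultimately show ?thesis using dX by simp
  qed
  have p22: "int t \<le> adim (A \<inter> B)" if A: "A \<in> S2" and B: "B \<in> S2" for A B
  proof -
    obtain U1 where U1: "U1 \<in> US" "A = tr ob U1" using S2_at[OF A] by blast
    obtain U2 where U2: "U2 \<in> US" "B = tr ob U2" using S2_at[OF B] by blast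
    have "adim (A \<inter> B) = int (vec.dim (U1 \<inter> U2))" using adim_Int_tr[OF USs(1)[OF U1(1)] USs(1)[OF U2(1)]] U1 U2 by simp
    moreover have "vec.dim D \<le> vec.dim (U1 \<inter> U2)" using USs[OF U1(1)] USs[OF U2(1)] by (intro vec.dim_subset) auto
    ultimately show ?thesis using dD by simp
  qed
  have pw: "\<forall>A\<in>S1 \<union> S2. \<forall>B\<in>S1 \<union> S2. A \<noteq> B \<longrightarrow> meets_in_at_least (int t) A B"
    unfolding meets_in_at_least_def using p11 p12 p22 by (metis Int_commute Un_iff)
  have mx: "\<exists>A\<in>S1 \<union> S2. \<not> meets_in_at_least (int t) C A"
    if Ck: "aspace (int k) C" and CS: "C \<notin> S1 \<union> S2" for C
  proof -
    obtain c0 where c0: "c0 \<in> C" using aspace_nat_ne[OF Ck] by blast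
    define W where "W = direction C"
    have Ws: "vec.subspace W" and dW: "vec.dim W = k" and Cat: "\<And>p. p \<in> C \<Longrightarrow> C = tr p W"
      using aspace_at[OF Ck c0] aspace_at[OF Ck] by (auto simp: W_def)
    have dis: "\<not> meets_in_at_least (int t) C A" if "C \<inter> A = {}" for A
      using that by (simp add: meets_in_at_least_def)
    show ?thesis
    proof (cases "C \<subseteq> tr ob Sg")
      case True
      have WSg: "W \<subseteq> Sg" using tr_sub_dir[OF Ws Sgs] True Cat[OF c0] by metis
      show ?thesis
      proof (cases "D \<subseteq> W")
        case False
        then have "W \<in> WS" using Ws dW WSg by (simp add: WS_def)
        then obtain A where A: "A \<in> S1" "direction A = W" using img1 by force
        obtain a where a: "a \<in> A" using dirS1[OF A(1)] by auto
        have Aa: "A = tr a W" using dirS1[OF A(1)] a A(2) by auto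
        have "A \<noteq> C" using A CS by auto
        then have "C \<inter> A = {}" using parallel_disjoint[OF Ws] Aa Cat[OF c0] by metis
        then show ?thesis using dis A(1) by blast
      next
        case True
        have "W \<inter> Sg \<noteq> D" using WSg dW dD tk by (metis Int_absorb2 less_irrefl)
        then have "W \<in> US" using Ws dW True by (simp add: US_def)
        then have B: "tr ob W \<in> S2" using S2_eq by auto
        then have "tr ob W \<noteq> C" using CS by auto
        then have "C \<inter> tr ob W = {}" using parallel_disjoint[OF Ws] Cat[OF c0] by metis
        then show ?thesis using dis B by blast
      qed
    next
      case False
      note CnSg = False
      show ?thesis
      proof (cases "C \<inter> tr ob Sg = {}")
        case True
        then have "C \<inter> \<pi> = {}" using S1Sig[OF piS1] by blast
        then show ?thesis using dis piS1 by blast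
      next
        case False
        then obtain c where c: "c \<in> C" "c \<in> tr ob Sg" by blast
        have Cc: "C = tr c W" using Cat[OF c(1)] .
        define c' where "c' = c - ob"
        have c'Sg: "c' \<in> Sg" using c(2) mem_tr[of c ob Sg] by (simp add: c'_def)
        have WnSg: "\<not> W \<subseteq> Sg"
        proof
          assume "W \<subseteq> Sg"
          then have "tr c W \<subseteq> tr c Sg" by (rule image_mono)
          moreover have "tr c Sg = tr ob Sg" using tr_recenter[OF Sgs c(2)] by simp
          ultimately show False using CnSg Cc by simp
        qed
        show ?thesis
        proof (cases "D \<subseteq> W \<and> c' \<in> W")
          case True
          have "ob - c \<in> W" using True Ws vec.subspace_neg[OF Ws, of c'] by (simp add: c'_def)
          then have "ob \<in> C" using Cc mem_tr[of ob c W] by blast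
          then have Cob: "C = tr ob W" using Cat by blast
          have dC: "\<delta> \<subseteq> C" using deD Cob True image_mono by metis
          have "C \<notin> S2" using CS by simp
          then have "\<not> int t + 1 \<le> adim (C \<inter> Sig)" using Ck dC by (simp add: S2_def meets_in_at_least_def)
          moreover have "adim (C \<inter> Sig) = int (vec.dim (W \<inter> Sg))" using adim_Int_tr[OF Ws Sgs] Cob SigE by simp
          ultimately have le: "vec.dim (W \<inter> Sg) \<le> t" by simp
          have WSgs: "vec.subspace (W \<inter> Sg)" using Ws Sgs by (simp add: vec.subspace_inter)
          have WSgD: "W \<inter> Sg = D" using dim_eq_subspace[OF Ds WSgs] True DSg le dD by auto
          have "adim (C \<inter> \<pi>) = int (vec.dim (W \<inter> P))" using adim_Int_tr[OF Ws Ps] Cob piP by simp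
          moreover have "vec.dim (W \<inter> P) \<le> vec.dim (P \<inter> D)"
            using WSgD PSg by (intro vec.dim_subset) auto
          ultimately have "adim (C \<inter> \<pi>) < int t" using dPD t1 by simp
          then have "\<not> meets_in_at_least (int t) C \<pi>" by (simp add: meets_in_at_least_def)
          then show ?thesis using piS1 by blast
        next
          case False
          have n2: "2 * k - t < CARD('n)" using nbig by simp
          obtain U where U: "vec.subspace U" "vec.dim U = k" "D \<subseteq> U" "t + 1 \<le> vec.dim (U \<inter> Sg)"
            and alt: "(\<forall>w\<in>W. \<forall>u\<in>U. c' + w \<noteq> u) \<or> vec.dim (W \<inter> U) < t"
            using exists_bad_U[OF Ds Sgs Ws DSg dD dSg dW t1 tk n2 c'Sg WnSg False] by blast
          have "U \<inter> Sg \<noteq> D" using U(4) dD by auto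
          then have "U \<in> US" using U by (simp add: US_def)
          then have A: "tr ob U \<in> S2" using S2_eq by auto
          have "adim (C \<inter> tr ob U) < int t"
          proof (cases "C \<inter> tr ob U = {}")
            case True then show ?thesis by simp
          next
            case False
            then obtain p where p: "p \<in> tr c W \<inter> tr ob U" using Cc by blast
            have ad: "adim (C \<inter> tr ob U) = int (vec.dim (W \<inter> U))" using adim_Int_pt[OF Ws U(1) p] Cc by simp
            have "\<not> (\<forall>w\<in>W. \<forall>u\<in>U. c' + w \<noteq> u)"
            proof
              assume H: "\<forall>w\<in>W. \<forall>u\<in>U. c' + w \<noteq> u"
              have "p - c \<in> W" "p - ob \<in> U" using p mem_tr[of p c W] mem_tr[of p ob U] by blast+
              moreover have "c' + (p - c) = p - ob" by (simp add: c'_def)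
              ultimately show False using H by blast
            qed
            then have "vec.dim (W \<inter> U) < t" using alt by blast
            then show ?thesis using ad by simp
          qed
          then have "\<not> meets_in_at_least (int t) C (tr ob U)" by (simp add: meets_in_at_least_def)
          then show ?thesis using A by blast
        qed
      qed
    qed
  qed
  have maxi: "maximal_t_intersecting k t (S1 \<union> S2)"
    unfolding maximal_t_intersecting_def
  proof (intro conjI)
    show "\<forall>A\<in>S1 \<union> S2. aspace (int k) A" using S1k by (auto simp: S2_def)
    show "\<forall>A\<in>S1 \<union> S2. \<forall>B\<in>S1 \<union> S2. A \<noteq> B \<longrightarrow> meets_in_at_least (int t) A B" by (rule pw)
    show "\<forall>C. aspace (int k) C \<and> C \<notin> S1 \<union> S2 \<longrightarrow> (\<exists>A\<in>S1 \<union> S2. \<not> meets_in_at_least (int t) C A)"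
      using mx by blast
  qed
  have final: "theta q k - theta q (k - t) + qbinom q (n - t) (k - t)
                 - q ^ ((k - t + 1) * (k - t)) * qbinom q (n - k - 1) (k - t)
              = theta q k + (\<Sum>j<k - t - 1. qbinom q (k - t + 1) (j + 1)
                   * q ^ ((k - t - j) * (k - t - j - 1)) * qbinom q (n - k - 1) (k - t - j - 1))"
    using final_identity[OF q1 tk] nk tk by simp
  show ?thesis
    unfolding Let_def q_def[symmetric] n_def[symmetric] Sig_def[symmetric] S2_def[symmetric]
    using maxi cardS final by blast
qed

end
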